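(* Let $\mathbb{X}$ be a set, $E\subset\mathbb{R}^{\mathbb{X}}$ a real vector subspace, $C=(E\cap[0,\infty)^{\mathbb{X}})\setminus\{0\}$, and $\Pi:E\to E/\mathcal{R}$ the canonical projection, where $f\mathcal{R}g$ iff $f=bg$ for some $b>0$. For $\bar f,\bar g\in\Pi(C)$ set $d(\bar f,\bar g)=\frac{1-m(f,g)}{1+m(f,g)}$ where $f\in\bar f$, $g\in\bar g$. Then $d$ is well defined (independent of the choice of $f\in\bar f,g\in\bar g$), is a distance on $\Pi(C)$, and satisfies $d\le 1$.
   Context: The order on $\mathbb{R}^{\mathbb{X}}$ is pointwise. For $f,g\in C$, $\aleph(f,g)=\sup\{b\ge0\mid bf\le g\}$ and $m(f,g)=\aleph(f,g)\aleph(g,f)$. *)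

theory Defs
  imports Complex_Main
begin

definition lin_subspace :: "('x \<Rightarrow> real) set \<Rightarrow> bool" where
  "lin_subspace E \<longleftrightarrow> (\<lambda>_. 0) \<in> E \<and>
     (\<forall>f\<in>E. \<forall>g\<in>E. (\<lambda>x. f x + g x) \<in> E) \<and>
     (\<forall>c::real. \<forall>f\<in>E. (\<lambda>x. c * f x) \<in> E)"

definition cone_C :: "('x \<Rightarrow> real) set \<Rightarrow> ('x \<Rightarrow> real) set" where
  "cone_C E = {f \<in> E. (\<forall>x. 0 \<le> f x)} - {(\<lambda>_. 0)}"

definition aleph :: "('x \<Rightarrow> real) \<Rightarrow> ('x \<Rightarrow> real) \<Rightarrow> real" where
  "aleph f g = Sup {b. 0 \<le> b \<and> (\<forall>x. b * f x \<le> g x)}"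

definition mfun :: "('x \<Rightarrow> real) \<Rightarrow> ('x \<Rightarrow> real) \<Rightarrow> real" where
  "mfun f g = aleph f g * aleph g f"

definition relR :: "('x \<Rightarrow> real) \<Rightarrow> ('x \<Rightarrow> real) \<Rightarrow> bool" where
  "relR f g \<longleftrightarrow> (\<exists>b>0. f = (\<lambda>x. b * g x))"

definition proj :: "('x \<Rightarrow> real) set \<Rightarrow> ('x \<Rightarrow> real) \<Rightarrow> ('x \<Rightarrow> real) set" where
  "proj E f = {g \<in> E. relR g f}"

definition drep :: "('x \<Rightarrow> real) \<Rightarrow> ('x \<Rightarrow> real) \<Rightarrow> real" where
  "drep f g = (1 - mfun f g) / (1 + mfun f g)"

definition dist_cls :: "('x \<Rightarrow> real) set \<Rightarrow> ('x \<Rightarrow> real) set \<Rightarrow> real" where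
  "dist_cls F G = drep (SOME f. f \<in> F) (SOME g. g \<in> G)"

definition is_distance :: "'a set \<Rightarrow> ('a \<Rightarrow> 'a \<Rightarrow> real) \<Rightarrow> bool" where
  "is_distance S d \<longleftrightarrow>
     (\<forall>x\<in>S. \<forall>y\<in>S. 0 \<le> d x y) \<and>
     (\<forall>x\<in>S. \<forall>y\<in>S. d x y = 0 \<longleftrightarrow> x = y) \<and>
     (\<forall>x\<in>S. \<forall>y\<in>S. d x y = d y x) \<and>
     (\<forall>x\<in>S. \<forall>y\<in>S. \<forall>z\<in>S. d x z \<le> d x y + d y z)"

end

theory Submission
  imports Defs
begin

definition posf :: "('x \<Rightarrow> real) \<Rightarrow> bool" where
  "posf f \<longleftrightarrow> (\<forall>x. 0 \<le> f x) \<and> (\<exists>x. 0 < f x)"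

lemma aleph_props:
  assumes "posf f" "\<forall>x. 0 \<le> g x"
  shows "0 \<le> aleph f g" "\<forall>x. aleph f g * f x \<le> g x"
    "\<And>b. 0 \<le> b \<Longrightarrow> (\<forall>x. b * f x \<le> g x) \<Longrightarrow> b \<le> aleph f g"
proof -
  let ?S = "{b. 0 \<le> b \<and> (\<forall>x. b * f x \<le> g x)}"
  obtain x0 where x0: "0 < f x0" using assms(1) unfolding posf_def by auto
  have ne: "0 \<in> ?S" using assms by auto
  have bd: "\<forall>b\<in>?S. b \<le> g x0 / f x0"
    using x0 by (auto simp: pos_le_divide_eq)
  hence bdd: "bdd_above ?S" by (auto simp: bdd_above_def)
  show "0 \<le> aleph f g" unfolding aleph_def by (rule cSup_upper[OF ne bdd])
  show "\<And>b. 0 \<le> b \<Longrightarrow> (\<forall>x. b * f x \<le> g x) \<Longrightarrow> b \<le> aleph f g"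
    unfolding aleph_def by (rule cSup_upper[OF _ bdd]) auto
  show "\<forall>x. aleph f g * f x \<le> g x"
  proof
    fix x
    show "aleph f g * f x \<le> g x"
    proof (cases "f x = 0")
      case True thus ?thesis using assms by simp
    next
      case False
      hence fx: "0 < f x" using assms unfolding posf_def by (metis less_eq_real_def)
      have "aleph f g \<le> g x / f x" unfolding aleph_def
        by (rule cSup_least) (use ne fx in \<open>auto simp: pos_le_divide_eq\<close>)
      thus ?thesis using fx by (simp add: pos_le_divide_eq)
    qed
  qed
qed

lemma posf_scale: "posf f \<Longrightarrow> 0 < b \<Longrightarrow> posf (\<lambda>x. b * f x)"
  unfolding posf_def by (auto intro: mult_pos_pos)

lemma aleph_scale:
  assumes "posf f" "posf g" "0 < b" "0 < c"
  shows "aleph (\<lambda>x. b * f x) (\<lambda>x. c * g x) = c / b * aleph f g"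
proof -
  have g0: "\<forall>x. 0 \<le> g x" using assms(2) unfolding posf_def by auto
  have cg0: "\<forall>x. 0 \<le> c * g x" using g0 assms by simp
  let ?a = "aleph f g" and ?a' = "aleph (\<lambda>x. b * f x) (\<lambda>x. c * g x)"
  note A = aleph_props[OF assms(1) g0]
  note A' = aleph_props[OF posf_scale[OF assms(1,3)] cg0]
  have "c / b * ?a \<le> ?a'"
  proof (rule A'(3))
    show "0 \<le> c / b * ?a" using A(1) assms by simp
    show "\<forall>x. c / b * ?a * (b * f x) \<le> c * g x"
    proof
      fix x
      have "c / b * ?a * (b * f x) = c * (?a * f x)" using assms by simp
      also have "\<dots> \<le> c * g x" using A(2) assms by simp
      finally show "c / b * ?a * (b * f x) \<le> c * g x" .
    qed
  qed
  moreover have "b / c * ?a' \<le> ?a"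
  proof (rule A(3))
    show "0 \<le> b / c * ?a'" using A'(1) assms by simp
    show "\<forall>x. b / c * ?a' * f x \<le> g x"
    proof
      fix x
      have "b / c * ?a' * f x = (?a' * (b * f x)) / c" using assms by simp
      also have "\<dots> \<le> g x"
      proof -
        have "?a' * (b * f x) \<le> c * g x" using A'(2) by blast
        thus ?thesis using assms(4) by (simp add: pos_divide_le_eq mult.commute)
      qed
      finally show "b / c * ?a' * f x \<le> g x" .
    qed
  qed
  hence "?a' \<le> c / b * ?a" using assms by (simp add: field_simps)
  ultimately show ?thesis by simp
qed

lemma mfun_scale:
  assumes "posf f" "posf g" "0 < b" "0 < c"
  shows "mfun (\<lambda>x. b * f x) (\<lambda>x. c * g x) = mfun f g"
  unfolding mfun_def using aleph_scale[OF assms] aleph_scale[OF assms(2,1,4,3)] assms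
  by simp

lemma mfun_bounds:
  assumes "posf f" "posf g"
  shows "0 \<le> mfun f g" "mfun f g \<le> 1"
proof -
  have f0: "\<forall>x. 0 \<le> f x" and g0: "\<forall>x. 0 \<le> g x" using assms unfolding posf_def by auto
  note A = aleph_props[OF assms(1) g0] and B = aleph_props[OF assms(2) f0]
  show "0 \<le> mfun f g" unfolding mfun_def using A(1) B(1) by simp
  obtain x0 where x0: "0 < f x0" using assms(1) unfolding posf_def by auto
  have "aleph g f * (aleph f g * f x0) \<le> aleph g f * g x0"
    using A(2) B(1) by (simp add: mult_left_mono)
  also have "\<dots> \<le> f x0" using B(2) by simp
  finally show "mfun f g \<le> 1" unfolding mfun_def using x0
    by (simp add: mult.assoc mult.left_commute)
qed

lemma mfun_one:
  assumes "posf f" "posf g" "mfun f g = 1"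
  shows "\<exists>a>0. g = (\<lambda>x. a * f x)"
proof -
  have f0: "\<forall>x. 0 \<le> f x" and g0: "\<forall>x. 0 \<le> g x" using assms unfolding posf_def by auto
  note A = aleph_props[OF assms(1) g0] and B = aleph_props[OF assms(2) f0]
  let ?a = "aleph f g" and ?b = "aleph g f"
  have ab: "?a * ?b = 1" using assms(3) unfolding mfun_def .
  hence apos: "0 < ?a" using A(1) by (metis less_eq_real_def mult_zero_left zero_neq_one)
  have bpos: "0 < ?b" using ab B(1) by (metis less_eq_real_def mult_zero_right zero_neq_one)
  have "g = (\<lambda>x. ?a * f x)"
  proof
    fix x
    have "?b * g x \<le> f x" using B(2) by simp
    hence "?a * (?b * g x) \<le> ?a * f x" using apos by simp
    hence "g x \<le> ?a * f x" using ab by (simp add: mult.assoc[symmetric])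
    thus "g x = ?a * f x" using A(2) by (meson order_antisym)
  qed
  thus ?thesis using apos by blast
qed

lemma aleph_trans:
  assumes "posf f" "posf g" "posf h"
  shows "aleph f g * aleph g h \<le> aleph f h"
proof -
  have g0: "\<forall>x. 0 \<le> g x" and h0: "\<forall>x. 0 \<le> h x" using assms unfolding posf_def by auto
  note A = aleph_props[OF assms(1) g0] and B = aleph_props[OF assms(2) h0]
    and C = aleph_props[OF assms(1) h0]
  show ?thesis
  proof (rule C(3))
    show "0 \<le> aleph f g * aleph g h" using A(1) B(1) by simp
    show "\<forall>x. aleph f g * aleph g h * f x \<le> h x"
    proof
      fix x
      have "aleph g h * (aleph f g * f x) \<le> aleph g h * g x"
        using A(2) B(1) by (simp add: mult_left_mono)
      also have "\<dots> \<le> h x" using B(2) by simp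
      finally show "aleph f g * aleph g h * f x \<le> h x" by (simp add: mult_ac)
    qed
  qed
qed

lemma mfun_trans:
  assumes "posf f" "posf g" "posf h"
  shows "mfun f g * mfun g h \<le> mfun f h"
proof -
  have f0: "\<forall>x. 0 \<le> f x" and g0: "\<forall>x. 0 \<le> g x" and h0: "\<forall>x. 0 \<le> h x"
    using assms unfolding posf_def by auto
  have 1: "aleph f g * aleph g h \<le> aleph f h" by (rule aleph_trans[OF assms])
  have 2: "aleph h g * aleph g f \<le> aleph h f" by (rule aleph_trans[OF assms(3,2,1)])
  have p: "0 \<le> aleph f g" "0 \<le> aleph g h" "0 \<le> aleph h g" "0 \<le> aleph g f"
    using aleph_props(1) assms f0 g0 h0 by auto
  have "(aleph f g * aleph g h) * (aleph h g * aleph g f) \<le> aleph f h * aleph h f"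
    by (rule mult_mono[OF 1 2]) (use p in \<open>auto intro: order_trans[OF _ 1]\<close>)
  thus ?thesis unfolding mfun_def by (simp add: mult_ac)
qed

lemma phi_ineq:
  fixes a b c :: real
  assumes "0 \<le> a" "a \<le> 1" "0 \<le> b" "b \<le> 1" "a * b \<le> c" "c \<le> 1"
  shows "(1 - c) / (1 + c) \<le> (1 - a) / (1 + a) + (1 - b) / (1 + b)"
proof -
  have c0: "0 \<le> c" using assms by (meson mult_nonneg_nonneg order_trans)
  have "(1 - c) / (1 + c) \<le> (1 - a*b) / (1 + a*b)"
  proof -
    have ab0: "0 \<le> a * b" using assms by simp
    have d: "(1-c)*(1+a*b) \<le> (1-a*b)*(1+c)" using assms(5) by (simp add: algebra_simps)
    have p1: "0 < 1 + c" and p2: "0 < 1 + a*b" using c0 ab0 by linarith+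
    show ?thesis using d p1 p2 by (simp add: frac_le_eq divide_nonpos_pos)
  qed
  also have "\<dots> \<le> (1 - a) / (1 + a) + (1 - b) / (1 + b)"
  proof -
    have e: "(1-a)/(1+a)+(1-b)/(1+b) = (1-a*b)/((1+a)*(1+b)/2)"
      using assms by (simp add: field_simps)
    have "0 \<le> (1-a)*(1-b)" using assms by simp
    hence le: "(1+a)*(1+b)/2 \<le> 1+a*b" by (simp add: algebra_simps)
    have n: "0 \<le> 1 - a*b" using assms by (simp add: mult_le_one)
    have pp: "0 < (1+a*b) * ((1+a)*(1+b)/2)" using assms
      by (intro mult_pos_pos divide_pos_pos) (auto intro: add_pos_nonneg)
    show ?thesis unfolding e by (rule divide_left_mono[OF le n pp])
  qed
  finally show ?thesis .
qed

lemma cone_posf: "f \<in> cone_C E \<Longrightarrow> posf f"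
  unfolding cone_C_def posf_def
  by (auto simp: fun_eq_iff) (metis less_eq_real_def)

lemma proj_elem:
  assumes "f \<in> proj E f0"
  shows "\<exists>b>0. f = (\<lambda>x. b * f0 x)"
  using assms unfolding proj_def relR_def by auto

lemma proj_self: "f0 \<in> cone_C E \<Longrightarrow> f0 \<in> proj E f0"
  unfolding proj_def relR_def cone_C_def by (auto intro: exI[of _ 1])

lemma drep_rep:
  assumes "f0 \<in> cone_C E" "g0 \<in> cone_C E" "f \<in> proj E f0" "g \<in> proj E g0"
  shows "drep f g = drep f0 g0"
proof -
  obtain b where b: "b > 0" "f = (\<lambda>x. b * f0 x)" using proj_elem[OF assms(3)] by blast
  obtain c where c: "c > 0" "g = (\<lambda>x. c * g0 x)" using proj_elem[OF assms(4)] by blast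
  show ?thesis unfolding drep_def b(2) c(2)
    using mfun_scale[OF cone_posf[OF assms(1)] cone_posf[OF assms(2)] b(1) c(1)] by simp
qed

lemma dist_rep:
  assumes "f0 \<in> cone_C E" "g0 \<in> cone_C E"
  shows "dist_cls (proj E f0) (proj E g0) = drep f0 g0"
proof -
  have "(SOME f. f \<in> proj E f0) \<in> proj E f0" using proj_self[OF assms(1)] by (rule someI[where P="\<lambda>f. f \<in> proj E f0"])
  moreover have "(SOME f. f \<in> proj E g0) \<in> proj E g0" using proj_self[OF assms(2)] by (rule someI[where P="\<lambda>f. f \<in> proj E g0"])
  ultimately show ?thesis unfolding dist_cls_def using drep_rep[OF assms] by blast
qed

lemma drep_bounds:
  assumes "posf f" "posf g"
  shows "0 \<le> drep f g" "drep f g \<le> 1"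
  using mfun_bounds[OF assms] unfolding drep_def by (auto simp: divide_simps)

lemma proj_eq:
  assumes "f0 \<in> cone_C E" "g0 = (\<lambda>x. a * f0 x)" "a > 0"
  shows "proj E g0 = proj E f0"
proof -
  have "relR h g0 \<longleftrightarrow> relR h f0" for h
  proof
    assume "relR h g0"
    then obtain b where "b > 0" "h = (\<lambda>x. b * g0 x)" unfolding relR_def by blast
    hence "b * a > 0" "h = (\<lambda>x. (b * a) * f0 x)" using assms by (auto simp: mult.assoc)
    thus "relR h f0" unfolding relR_def by blast
  next
    assume "relR h f0"
    then obtain b where "b > 0" "h = (\<lambda>x. b * f0 x)" unfolding relR_def by blast
    hence "b / a > 0" "h = (\<lambda>x. (b / a) * g0 x)" using assms by auto
    thus "relR h g0" unfolding relR_def by blast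
  qed
  thus ?thesis unfolding proj_def by auto
qed

theorem mainTheorem2:
  fixes E :: "('x \<Rightarrow> real) set"
  assumes "lin_subspace E"
  shows "(\<forall>F\<in>proj E ` cone_C E. \<forall>G\<in>proj E ` cone_C E. \<forall>f\<in>F. \<forall>g\<in>G.
            dist_cls F G = drep f g)
       \<and> is_distance (proj E ` cone_C E) dist_cls
       \<and> (\<forall>F\<in>proj E ` cone_C E. \<forall>G\<in>proj E ` cone_C E. dist_cls F G \<le> 1)"
proof (intro conjI)
  show "\<forall>F\<in>proj E ` cone_C E. \<forall>G\<in>proj E ` cone_C E. \<forall>f\<in>F. \<forall>g\<in>G.
            dist_cls F G = drep f g"
  proof (intro ballI)
    fix F G f g assume "F \<in> proj E ` cone_C E" "G \<in> proj E ` cone_C E" "f \<in> F" "g \<in> G"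
    then obtain f0 g0 where f0: "f0 \<in> cone_C E" "F = proj E f0"
      and g0: "g0 \<in> cone_C E" "G = proj E g0" and fg: "f \<in> proj E f0" "g \<in> proj E g0" by blast
    show "dist_cls F G = drep f g" unfolding f0(2) g0(2) dist_rep[OF f0(1) g0(1)]
      using drep_rep[OF f0(1) g0(1) fg] by simp
  qed
  show "\<forall>F\<in>proj E ` cone_C E. \<forall>G\<in>proj E ` cone_C E. dist_cls F G \<le> 1"
  proof (intro ballI)
    fix F G assume "F \<in> proj E ` cone_C E" "G \<in> proj E ` cone_C E"
    then obtain f0 g0 where f0: "f0 \<in> cone_C E" "F = proj E f0"
      and g0: "g0 \<in> cone_C E" "G = proj E g0" by blast
    show "dist_cls F G \<le> 1" unfolding f0(2) g0(2) dist_rep[OF f0(1) g0(1)]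
      using drep_bounds(2)[OF cone_posf[OF f0(1)] cone_posf[OF g0(1)]] .
  qed
  show "is_distance (proj E ` cone_C E) dist_cls"
    unfolding is_distance_def
  proof (intro conjI)
    show "\<forall>x\<in>proj E ` cone_C E. \<forall>y\<in>proj E ` cone_C E. 0 \<le> dist_cls x y"
    proof (intro ballI)
      fix F G assume "F \<in> proj E ` cone_C E" "G \<in> proj E ` cone_C E"
      then obtain f0 g0 where f0: "f0 \<in> cone_C E" "F = proj E f0"
        and g0: "g0 \<in> cone_C E" "G = proj E g0" by blast
      show "0 \<le> dist_cls F G" unfolding f0(2) g0(2) dist_rep[OF f0(1) g0(1)]
        using drep_bounds(1)[OF cone_posf[OF f0(1)] cone_posf[OF g0(1)]] .
    qed
    show "\<forall>x\<in>proj E ` cone_C E. \<forall>y\<in>proj E ` cone_C E. dist_cls x y = dist_cls y x"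
    proof (intro ballI)
      fix F G assume "F \<in> proj E ` cone_C E" "G \<in> proj E ` cone_C E"
      then obtain f0 g0 where f0: "f0 \<in> cone_C E" "F = proj E f0"
        and g0: "g0 \<in> cone_C E" "G = proj E g0" by blast
      show "dist_cls F G = dist_cls G F" unfolding f0(2) g0(2) dist_rep[OF f0(1) g0(1)]
          dist_rep[OF g0(1) f0(1)]
        by (simp add: drep_def mfun_def mult.commute)
    qed
    show "\<forall>x\<in>proj E ` cone_C E. \<forall>y\<in>proj E ` cone_C E. (dist_cls x y = 0) = (x = y)"
    proof (intro ballI)
      fix F G assume "F \<in> proj E ` cone_C E" "G \<in> proj E ` cone_C E"
      then obtain f0 g0 where f0: "f0 \<in> cone_C E" "F = proj E f0"
        and g0: "g0 \<in> cone_C E" "G = proj E g0" by blast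
      have pf: "posf f0" and pg: "posf g0" using f0 g0 cone_posf by auto
      have "(drep f0 g0 = 0) = (proj E f0 = proj E g0)"
      proof
        assume "drep f0 g0 = 0"
        hence "mfun f0 g0 = 1" unfolding drep_def using mfun_bounds[OF pf pg]
          by (auto simp: divide_simps)
        then obtain a where "a > 0" "g0 = (\<lambda>x. a * f0 x)" using mfun_one[OF pf pg] by blast
        thus "proj E f0 = proj E g0" using proj_eq[OF f0(1)] by simp
      next
        assume "proj E f0 = proj E g0"
        hence "drep f0 g0 = drep f0 f0"
          using drep_rep[OF f0(1) f0(1) proj_self[OF f0(1)]] proj_self[OF g0(1)] by simp
        moreover have "mfun f0 f0 = 1"
        proof -
          have f00: "\<forall>x. 0 \<le> f0 x" using pf unfolding posf_def by auto
          note A = aleph_props[OF pf f00]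
          have "1 \<le> aleph f0 f0" using A(3)[of 1] by simp
          moreover obtain x0 where "0 < f0 x0" using pf unfolding posf_def by auto
          hence "aleph f0 f0 \<le> 1" using A(2) by (metis mult_le_cancel_right2 order_less_imp_not_less)
          ultimately show ?thesis unfolding mfun_def by simp
        qed
        ultimately show "drep f0 g0 = 0" unfolding drep_def by simp
      qed
      thus "(dist_cls F G = 0) = (F = G)" unfolding f0(2) g0(2) dist_rep[OF f0(1) g0(1)] .
    qed
    show "\<forall>x\<in>proj E ` cone_C E. \<forall>y\<in>proj E ` cone_C E. \<forall>z\<in>proj E ` cone_C E.
            dist_cls x z \<le> dist_cls x y + dist_cls y z"
    proof (intro ballI)
      fix F G H assume "F \<in> proj E ` cone_C E" "G \<in> proj E ` cone_C E" "H \<in> proj E ` cone_C E"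
      then obtain f0 g0 h0 where f0: "f0 \<in> cone_C E" "F = proj E f0"
        and g0: "g0 \<in> cone_C E" "G = proj E g0" and h0: "h0 \<in> cone_C E" "H = proj E h0" by blast
      have pf: "posf f0" and pg: "posf g0" and ph: "posf h0" using f0 g0 h0 cone_posf by auto
      have "drep f0 h0 \<le> drep f0 g0 + drep g0 h0"
        unfolding drep_def
        by (rule phi_ineq) (use mfun_bounds[OF pf pg] mfun_bounds[OF pg ph]
            mfun_bounds[OF pf ph] mfun_trans[OF pf pg ph] in auto)
      thus "dist_cls F H \<le> dist_cls F G + dist_cls G H"
        unfolding f0(2) g0(2) h0(2) dist_rep[OF f0(1) g0(1)] dist_rep[OF g0(1) h0(1)]
          dist_rep[OF f0(1) h0(1)] .
    qed
  qed
qed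

end
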